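(* Let $K$ be an infinite commutative domain and $R$ an associative $K$-algebra on which $K$ acts torsion-freely. (i) If a semigroup $S$ satisfies an identity in variables $x,y,x_3,\dots$ which is left reduced (respectively right reduced, reduced), then $S$ satisfies an identity of the same type involving only the variables $x$ and $y$. (ii) If $R$ satisfies a binomial identity then either $R$ is bounded nil or $(R,\cdot)$ satisfies a semigroup identity. (iii) If $R$ satisfies a binomial identity which is left reduced (respectively right reduced, reduced) then $R$ satisfies a partial linear identity of the same type. (iv) If $y^n=0$ for all $y\in R$ then $e_{2n-1}=0$ for all $x,y\in R$.
   Context: A semigroup identity is $u=v$ with $u\ne v$ words in the free semigroup on $\{x,y,x_3,\dots\}$; it is left reduced if the first letters of $u,v$ differ, right reduced if the last letters differ, reduced if both. A binomial identity is a nontrivial polynomial identity $\alpha_1u_1+\alpha_2u_2=0$ ($u_1,u_2$ monomials, $\alpha_i\in K$), with left/right reduced defined via $u_1,u_2$ in the same way. $R$ is bounded nil if there is $n$ with $r^n=0$ for all $r\in R$. A partial linear identity is a nontrivial identity $\sum_{i=0}^n\alpha_iy^ixy^{n-i}=0$ ($\alpha_i\in K$); it is left reduced if $\alpha_0\ne0$, right reduced if $\alpha_n\neq0$, reduced if both. $e_1=[x,y]=xy-yx$, $e_{m+1}=[e_m,y]$. *)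

theory Defs
  imports Complex_Main
begin

text \<open>Variables of the free semigroup are natural numbers: 0 = x, 1 = y, 2 = x_3, 3 = x_4, ...
  Words (elements of the free semigroup) are nonempty lists of variables.\<close>

type_synonym word = "nat list"

fun eval_word :: "(nat \<Rightarrow> 'a::semigroup_mult) \<Rightarrow> word \<Rightarrow> 'a" where
  "eval_word \<sigma> [] = undefined"
| "eval_word \<sigma> [v] = \<sigma> v"
| "eval_word \<sigma> (v # w # ws) = \<sigma> v * eval_word \<sigma> (w # ws)"

definition sg_identity :: "word \<Rightarrow> word \<Rightarrow> bool" where
  "sg_identity u v \<longleftrightarrow> u \<noteq> [] \<and> v \<noteq> [] \<and> u \<noteq> v"

definition sg_satisfies :: "'a::semigroup_mult itself \<Rightarrow> word \<Rightarrow> word \<Rightarrow> bool" where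
  "sg_satisfies T u v \<longleftrightarrow> (\<forall>\<sigma> :: nat \<Rightarrow> 'a. eval_word \<sigma> u = eval_word \<sigma> v)"

definition left_reduced :: "word \<Rightarrow> word \<Rightarrow> bool" where
  "left_reduced u v \<longleftrightarrow> hd u \<noteq> hd v"

definition right_reduced :: "word \<Rightarrow> word \<Rightarrow> bool" where
  "right_reduced u v \<longleftrightarrow> last u \<noteq> last v"

definition reduced :: "word \<Rightarrow> word \<Rightarrow> bool" where
  "reduced u v \<longleftrightarrow> left_reduced u v \<and> right_reduced u v"

definition in_xy :: "word \<Rightarrow> word \<Rightarrow> bool" where
  "in_xy u v \<longleftrightarrow> set u \<union> set v \<subseteq> {0, 1}"

definition assoc_algebra :: "('k::comm_ring_1 \<Rightarrow> 'r::ring \<Rightarrow> 'r) \<Rightarrow> bool" where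
  "assoc_algebra sc \<longleftrightarrow> module sc \<and>
     (\<forall>a r s. sc a (r * s) = sc a r * s \<and> sc a (r * s) = r * sc a s)"

definition torsion_free :: "('k::comm_ring_1 \<Rightarrow> 'r::ring \<Rightarrow> 'r) \<Rightarrow> bool" where
  "torsion_free sc \<longleftrightarrow> (\<forall>a r. a \<noteq> 0 \<longrightarrow> sc a r = 0 \<longrightarrow> r = 0)"

text \<open>Binomial polynomial a1 u1 + a2 u2 in the free (non-unital) algebra; it is nonzero
  (nontrivial) iff the monomials differ and some coefficient is nonzero, or the monomials
  coincide and the coefficients do not cancel.\<close>
definition binomial_nontrivial :: "'k::comm_ring_1 \<Rightarrow> word \<Rightarrow> 'k \<Rightarrow> word \<Rightarrow> bool" where
  "binomial_nontrivial a1 u1 a2 u2 \<longleftrightarrow> u1 \<noteq> [] \<and> u2 \<noteq> [] \<and>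
     ((u1 \<noteq> u2 \<and> (a1 \<noteq> 0 \<or> a2 \<noteq> 0)) \<or> (u1 = u2 \<and> a1 + a2 \<noteq> 0))"

definition binomial_satisfies ::
  "('k::comm_ring_1 \<Rightarrow> 'r::ring \<Rightarrow> 'r) \<Rightarrow> 'k \<Rightarrow> word \<Rightarrow> 'k \<Rightarrow> word \<Rightarrow> bool" where
  "binomial_satisfies sc a1 u1 a2 u2 \<longleftrightarrow>
     (\<forall>\<sigma>. sc a1 (eval_word \<sigma> u1) + sc a2 (eval_word \<sigma> u2) = 0)"

definition pl_mono :: "nat \<Rightarrow> nat \<Rightarrow> word" where
  "pl_mono n i = replicate i 1 @ [0] @ replicate (n - i) 1"

definition pl_satisfies :: "('k::comm_ring_1 \<Rightarrow> 'r::ring \<Rightarrow> 'r) \<Rightarrow> nat \<Rightarrow> (nat \<Rightarrow> 'k) \<Rightarrow> bool" where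
  "pl_satisfies sc n \<alpha> \<longleftrightarrow>
     (\<forall>x y :: 'r. (\<Sum>i\<le>n. sc (\<alpha> i) (eval_word (\<lambda>v. if v = 0 then x else y) (pl_mono n i))) = 0)"

definition pl_nontrivial :: "nat \<Rightarrow> (nat \<Rightarrow> 'k::zero) \<Rightarrow> bool" where
  "pl_nontrivial n \<alpha> \<longleftrightarrow> (\<exists>i\<le>n. \<alpha> i \<noteq> 0)"

text \<open>Power r^n for n \<ge> 1 in a (possibly non-unital) semigroup.\<close>
definition spow :: "'a::semigroup_mult \<Rightarrow> nat \<Rightarrow> 'a" where
  "spow r n = eval_word (\<lambda>_. r) (replicate n 0)"

definition bounded_nil :: "'r::ring itself \<Rightarrow> bool" where
  "bounded_nil T \<longleftrightarrow> (\<exists>n\<ge>1. \<forall>r :: 'r. spow r n = 0)"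

fun e_comm :: "'r::ring \<Rightarrow> 'r \<Rightarrow> nat \<Rightarrow> 'r" where
  "e_comm x y 0 = x"
| "e_comm x y (Suc m) = e_comm x y m * y - y * e_comm x y m"

end

theory Submission
  imports Defs "HOL-Computational_Algebra.Polynomial"
begin


lemma eval_map: "w \<noteq> [] \<Longrightarrow> eval_word \<tau> (map f w) = eval_word (\<tau> \<circ> f) w"
  by (induction \<tau>\<equiv>"\<tau> \<circ> f" w rule: eval_word.induct) auto

lemma eval_cons: "w \<noteq> [] \<Longrightarrow> eval_word \<sigma> (v # w) = \<sigma> v * eval_word \<sigma> w"
  by (cases w) auto

lemma eval_append: "u \<noteq> [] \<Longrightarrow> w \<noteq> [] \<Longrightarrow> eval_word \<sigma> (u @ w) = eval_word \<sigma> u * eval_word \<sigma> w"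
proof (induction u)
  case Nil then show ?case by simp
next
  case (Cons a u) then show ?case
    by (cases "u = []") (auto simp: eval_cons mult.assoc)
qed

lemma sat_map:
  assumes "sg_satisfies TYPE('s::semigroup_mult) u v" "u \<noteq> []" "v \<noteq> []"
  shows "sg_satisfies TYPE('s) (map f u) (map f v)"
  using assms unfolding sg_satisfies_def by (simp add: eval_map)

definition col :: "nat \<Rightarrow> nat \<Rightarrow> nat \<Rightarrow> nat \<Rightarrow> nat \<Rightarrow> nat" where
  "col a b c d k = (if k = a then 0 else if k = b then 1 else if k = c then (if d = a then 1 else 0)
     else if k = d then (if c = b then 0 else 1) else 0)"

lemma col_props: "a \<noteq> b \<Longrightarrow> c \<noteq> d \<Longrightarrow> col a b c d a = 0 \<and> col a b c d b = 1 \<and> col a b c d c \<noteq> col a b c d d"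
  unfolding col_def by auto

lemma col_01: "col a b c d k \<in> {0,1}"
  unfolding col_def by auto

lemma part_i:
  fixes u v :: word
  assumes "sg_identity u v" "sg_satisfies TYPE('s::semigroup_mult) u v"
  shows "left_reduced u v \<Longrightarrow> \<exists>u v. sg_identity u v \<and> left_reduced u v \<and> in_xy u v \<and> sg_satisfies TYPE('s) u v"
    and "right_reduced u v \<Longrightarrow> \<exists>u v. sg_identity u v \<and> right_reduced u v \<and> in_xy u v \<and> sg_satisfies TYPE('s) u v"
    and "reduced u v \<Longrightarrow> \<exists>u v. sg_identity u v \<and> reduced u v \<and> in_xy u v \<and> sg_satisfies TYPE('s) u v"
proof -
  have ne: "u \<noteq> []" "v \<noteq> []" using assms(1) by (auto simp: sg_identity_def)
  define f where "f = col (hd u) (hd v) (last u) (last v)"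
  have 01: "in_xy (map f u) (map f v)" unfolding in_xy_def f_def col_def by auto
  have sat: "sg_satisfies TYPE('s) (map f u) (map f v)" using sat_map assms ne by blast
  have hd: "hd (map f u) = f (hd u)" "hd (map f v) = f (hd v)"
    "last (map f u) = f (last u)" "last (map f v) = f (last v)" using ne by (auto simp: hd_map last_map)
  have ne2: "map f u \<noteq> []" "map f v \<noteq> []" using ne by auto
  show "left_reduced u v \<Longrightarrow> \<exists>u v. sg_identity u v \<and> left_reduced u v \<and> in_xy u v \<and> sg_satisfies TYPE('s) u v"
  proof -
    assume l: "left_reduced u v"
    define g where "g = col (hd u) (hd v) (hd u) (hd v)"
    have "in_xy (map g u) (map g v)" unfolding in_xy_def g_def col_def by auto
    moreover have "sg_satisfies TYPE('s) (map g u) (map g v)" using sat_map assms ne by blast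
    moreover have "hd (map g u) \<noteq> hd (map g v)" using ne l col_props unfolding g_def left_reduced_def
      by (auto simp: hd_map)
    ultimately show ?thesis using ne unfolding sg_identity_def left_reduced_def by (metis list.map_disc_iff)
  qed
  show "right_reduced u v \<Longrightarrow> \<exists>u v. sg_identity u v \<and> right_reduced u v \<and> in_xy u v \<and> sg_satisfies TYPE('s) u v"
  proof -
    assume l: "right_reduced u v"
    define g where "g = col (last u) (last v) (last u) (last v)"
    have "in_xy (map g u) (map g v)" unfolding in_xy_def g_def col_def by auto
    moreover have "sg_satisfies TYPE('s) (map g u) (map g v)" using sat_map assms ne by blast
    moreover have "last (map g u) \<noteq> last (map g v)" using ne l col_props unfolding g_def right_reduced_def
      by (auto simp: last_map)
    ultimately show ?thesis using ne unfolding sg_identity_def right_reduced_def by (metis list.map_disc_iff)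
  qed
  show "reduced u v \<Longrightarrow> \<exists>u v. sg_identity u v \<and> reduced u v \<and> in_xy u v \<and> sg_satisfies TYPE('s) u v"
  proof -
    assume l: "reduced u v"
    have "hd (map f u) \<noteq> hd (map f v)" "last (map f u) \<noteq> last (map f v)"
      using l col_props[of "hd u" "hd v" "last u" "last v"] ne
      by (auto simp: f_def hd_map last_map reduced_def left_reduced_def right_reduced_def)
    then show ?thesis using ne 01 sat unfolding sg_identity_def reduced_def left_reduced_def right_reduced_def
      by (metis list.map_disc_iff)
  qed
qed



inductive_set GS :: "'r::ring \<Rightarrow> 'r \<Rightarrow> nat \<Rightarrow> 'r set" for x y m where
  gen: "i \<le> m \<Longrightarrow> ((\<lambda>z. y * z) ^^ i) (((\<lambda>z. z * y) ^^ (m - i)) x) \<in> GS x y m"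
| dif: "a \<in> GS x y m \<Longrightarrow> b \<in> GS x y m \<Longrightarrow> a - b \<in> GS x y m"

lemma L_mult: "((\<lambda>z. y * z) ^^ i) z * w = ((\<lambda>z. y * z) ^^ i) (z * w)" for y z w :: "'r::ring"
  by (induction i) (auto simp: mult.assoc)

lemma R_mult: "w * ((\<lambda>z. z * y) ^^ i) z = ((\<lambda>z. z * y) ^^ i) (w * z)" for y z w :: "'r::ring"
  by (induction i) (auto simp flip: mult.assoc)

lemma GS_step: "a \<in> GS x y m \<Longrightarrow> a * y - y * a \<in> GS x y (Suc m)"
proof (induction rule: GS.induct)
  case (gen i)
  let ?L = "(\<lambda>z. y * z)" and ?R = "(\<lambda>z. z * y)"
  have 1: "(?L ^^ i) ((?R ^^ (m - i)) x) * y = (?L ^^ i) ((?R ^^ (Suc m - i)) x)"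
    using gen by (simp add: L_mult Suc_diff_le)
  have 2: "y * (?L ^^ i) ((?R ^^ (m - i)) x) = (?L ^^ Suc i) ((?R ^^ (Suc m - Suc i)) x)"
    by (simp add: funpow_swap1)
  show ?case unfolding 1 2 using gen by (intro GS.dif GS.gen) auto
next
  case (dif a b)
  have "(a - b) * y - y * (a - b) = (a * y - y * a) - (b * y - y * b)" by (simp add: algebra_simps)
  then show ?case using dif by (simp add: GS.dif)
qed

lemma e_GS: "e_comm x y m \<in> GS x y m"
proof (induction m)
  case 0
  have "((\<lambda>z. y * z) ^^ 0) (((\<lambda>z. z * y) ^^ (0 - 0)) x) \<in> GS x y 0" by (rule GS.gen) simp
  then show ?case by simp
next
  case (Suc m) then show ?case using GS_step by auto
qed

lemma GS_zero: "a \<in> GS x y m \<Longrightarrow> (\<And>i. i \<le> m \<Longrightarrow> ((\<lambda>z. y * z) ^^ i) (((\<lambda>z. z * y) ^^ (m - i)) x) = 0) \<Longrightarrow>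
  a = 0"
  by (induction rule: GS.induct) auto

lemma spow_Suc: "spow y (Suc (Suc k)) = y * spow y (Suc k)"
  by (simp add: spow_def)

lemma L_spow: "((\<lambda>z. y * z) ^^ Suc k) z = spow y (Suc k) * z" for y z :: "'r::ring"
proof (induction k arbitrary: z)
  case 0 then show ?case by (simp add: spow_def)
next
  case (Suc k) then show ?case by (simp add: spow_Suc mult.assoc)
qed

lemma R_spow: "((\<lambda>z. z * y) ^^ Suc k) z = z * spow y (Suc k)" for y z :: "'r::ring"
proof (induction k arbitrary: z)
  case 0 then show ?case by (simp add: spow_def)
next
  case (Suc k)
  have "spow y (Suc (Suc k)) = spow y (Suc k) * y"
  proof -
    have "replicate (Suc (Suc k)) (0::nat) = replicate (Suc k) 0 @ [0]" by (metis replicate_Suc replicate_append_same)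
    moreover have "eval_word (\<lambda>_. y) (replicate (Suc k) 0 @ [0]) = spow y (Suc k) * y"
      unfolding spow_def by (subst eval_append) auto
    ultimately show ?thesis unfolding spow_def by metis
  qed
  then show ?case using Suc by (simp add: mult.assoc)
qed

lemma L_zero: "((\<lambda>z. y * z) ^^ i) 0 = (0::'r::ring)"
  by (induction i) auto
lemma R_zero: "((\<lambda>z. z * y) ^^ i) 0 = (0::'r::ring)"
  by (induction i) auto

lemma part_iv:
  fixes x y :: "'r::ring"
  assumes n: "n \<ge> 1" and nil: "\<forall>y :: 'r. spow y n = 0"
  shows "e_comm x y (2 * n - 1) = 0"
proof (rule GS_zero[OF e_GS])
  fix i assume i: "i \<le> 2 * n - 1"
  obtain k where k: "n = Suc k" using n by (cases n) auto
  show "((\<lambda>z. y * z) ^^ i) (((\<lambda>z. z * y) ^^ (2 * n - 1 - i)) x) = 0"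
  proof (cases "n \<le> i")
    case True
    have "((\<lambda>z. y * z) ^^ i) = ((\<lambda>z. y * z) ^^ (i - n)) \<circ> ((\<lambda>z. y * z) ^^ n)"
      using True by (metis funpow_add le_add_diff_inverse2)
    then show ?thesis using L_spow[where y=y and k=k] nil k by (simp add: L_zero)
  next
    case False
    then have "n \<le> 2 * n - 1 - i" using i by auto
    then have "((\<lambda>z. z * y) ^^ (2 * n - 1 - i)) = ((\<lambda>z. z * y) ^^ (2 * n - 1 - i - n)) \<circ> ((\<lambda>z. z * y) ^^ n)"
      by (metis funpow_add le_add_diff_inverse2)
    then show ?thesis using R_spow[where y=y and k=k] nil k by (simp add: R_zero L_zero)
  qed
qed



lemma alg_module: "assoc_algebra sc \<Longrightarrow> module sc"
  by (simp add: assoc_algebra_def)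

lemma alg_l: "assoc_algebra sc \<Longrightarrow> sc a (r * s) = sc a r * s"
  by (simp add: assoc_algebra_def)
lemma alg_r: "assoc_algebra sc \<Longrightarrow> sc a (r * s) = r * sc a s"
  unfolding assoc_algebra_def by blast

lemma eval_scale:
  assumes alg: "assoc_algebra sc" and "w \<noteq> []"
  shows "eval_word (\<lambda>v. sc \<mu> (\<sigma> v)) w = sc (\<mu> ^ length w) (eval_word \<sigma> w)"
  using assms(2)
proof (induction \<sigma> w rule: eval_word.induct)
  case (2 \<sigma> v)
  interpret m: module sc using alg_module[OF alg] .
  show ?case by simp
next
  case (3 \<sigma> v w ws)
  interpret m: module sc using alg_module[OF alg] .
  have "eval_word (\<lambda>v. sc \<mu> (\<sigma> v)) (v # w # ws) = sc \<mu> (\<sigma> v) * sc (\<mu> ^ length (w # ws)) (eval_word \<sigma> (w # ws))"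
    using 3 by simp
  also have "\<dots> = sc \<mu> (\<sigma> v * sc (\<mu> ^ length (w # ws)) (eval_word \<sigma> (w # ws)))"
    by (simp only: alg_l[OF alg])
  also have "\<dots> = sc \<mu> (sc (\<mu> ^ length (w # ws)) (\<sigma> v * eval_word \<sigma> (w # ws)))"
    by (simp only: alg_r[OF alg])
  also have "\<dots> = sc (\<mu> ^ length (v # w # ws)) (eval_word \<sigma> (v # w # ws))" by simp
  finally show ?case .
qed simp

lemma finite_pow_eq:
  assumes "d \<noteq> e"
  shows "finite {\<mu> :: 'k::idom. \<mu> ^ d = \<mu> ^ e}"
proof -
  define p :: "'k poly" where "p = monom 1 d - monom 1 e"
  have "coeff p d = 1" using assms by (simp add: p_def coeff_monom)
  then have "p \<noteq> 0" by auto
  then have "finite {x. poly p x = 0}" by (rule poly_roots_finite)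
  moreover have "poly p x = x ^ d - x ^ e" for x by (simp add: p_def poly_monom)
  ultimately show ?thesis by simp
qed

lemma exists_avoid:
  assumes "infinite (UNIV :: 'k::idom set)" "finite (S :: 'k set)"
  shows "\<exists>\<mu>. \<mu> \<notin> S"
  using assms ex_new_if_finite by blast

lemma vander:
  fixes sc :: "'k::idom \<Rightarrow> 'r::ring \<Rightarrow> 'r"
  assumes Kinf: "infinite (UNIV :: 'k set)" and alg: "assoc_algebra sc" and tf: "torsion_free sc"
  shows "(\<forall>l. (\<Sum>k\<le>D. sc (l ^ k) (c k)) = 0) \<Longrightarrow> \<forall>k\<le>D. c k = 0"
proof (induction D arbitrary: c)
  case 0
  interpret m: module sc using alg_module[OF alg] .
  from 0[rule_format, of 1] show ?case by simp
next
  case (Suc D)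
  interpret m: module sc using alg_module[OF alg] .
  have fin: "finite (\<Union>k\<le>D. {\<mu> :: 'k. \<mu> ^ k = \<mu> ^ Suc D})"
    by (intro finite_UN_I finite_atMost finite_pow_eq) auto
  obtain \<mu> where mu: "\<mu> \<notin> (\<Union>k\<le>D. {\<mu> :: 'k. \<mu> ^ k = \<mu> ^ Suc D})"
    using exists_avoid[OF Kinf fin] by blast
  define c' where "c' k = sc (\<mu> ^ k - \<mu> ^ Suc D) (c k)" for k
  have "(\<Sum>k\<le>D. sc (l ^ k) (c' k)) = 0" for l
  proof -
    have S1: "(\<Sum>k\<le>Suc D. sc ((\<mu> * l) ^ k) (c k)) = (\<Sum>k\<le>Suc D. sc (l ^ k) (sc (\<mu> ^ k) (c k)))"
      by (simp add: power_mult_distrib mult.commute)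
    have S2: "sc (\<mu> ^ Suc D) (\<Sum>k\<le>Suc D. sc (l ^ k) (c k)) = (\<Sum>k\<le>Suc D. sc (l ^ k) (sc (\<mu> ^ Suc D) (c k)))"
      unfolding m.scale_sum_right by (rule sum.cong) (simp_all add: mult.commute)
    have "(\<Sum>k\<le>Suc D. sc (l ^ k) (c' k)) =
      (\<Sum>k\<le>Suc D. sc (l ^ k) (sc (\<mu> ^ k) (c k))) - (\<Sum>k\<le>Suc D. sc (l ^ k) (sc (\<mu> ^ Suc D) (c k)))"
      unfolding sum_subtractf[symmetric] c'_def by (simp only: m.scale_left_diff_distrib m.scale_right_diff_distrib)
    also have "\<dots> =
      (\<Sum>k\<le>Suc D. sc ((\<mu> * l) ^ k) (c k)) - sc (\<mu> ^ Suc D) (\<Sum>k\<le>Suc D. sc (l ^ k) (c k))"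
      unfolding S1 S2 ..
    also have "\<dots> = 0" using Suc.prems by simp
    finally show ?thesis by (simp add: c'_def del: power_Suc)
  qed
  then have c'0: "\<forall>k\<le>D. c' k = 0" using Suc.IH by blast
  have ck: "\<forall>k\<le>D. c k = 0"
  proof (intro allI impI)
    fix k assume "k \<le> D"
    then have "\<mu> ^ k - \<mu> ^ Suc D \<noteq> 0" "c' k = 0" using mu c'0 by auto
    then show "c k = 0" using tf unfolding torsion_free_def c'_def by blast
  qed
  have "(\<Sum>k\<le>Suc D. sc (1 ^ k) (c k)) = 0" using Suc.prems by blast
  then have "c (Suc D) = 0" using ck by simp
  then show ?case using ck le_Suc_eq by auto
qed



fun lc :: "'r::ring \<Rightarrow> 'r \<Rightarrow> nat set \<Rightarrow> word \<Rightarrow> nat \<Rightarrow> 'r" where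
  "lc x y A [] k = 0"
| "lc x y A [v] k = (if k = 0 then y else if k = 1 \<and> v \<in> A then x else 0)"
| "lc x y A (v # w # ws) k = y * lc x y A (w # ws) k + (if v \<in> A \<and> k \<ge> 1 then x * lc x y A (w # ws) (k - 1) else 0)"

lemma lc_big: "length w < k \<Longrightarrow> lc x y A w k = 0"
  by (induction x y A w k rule: lc.induct) auto

lemma lc_expand:
  assumes alg: "assoc_algebra sc" and "w \<noteq> []"
  shows "eval_word (\<lambda>v. y + (if v \<in> A then sc l x else 0)) w = (\<Sum>k\<le>length w. sc (l ^ k) (lc x y A w k))"
  using assms(2)
proof (induction w rule: induct_list012)
  case (2 v)
  interpret m: module sc using alg_module[OF alg] .
  show ?case by simp
next
  case (3 v w ws)
  interpret m: module sc using alg_module[OF alg] .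
  let ?W = "w # ws" and ?m = "length (w # ws)"
  let ?\<sigma> = "\<lambda>v. y + (if v \<in> A then sc l x else 0)"
  have IH: "eval_word ?\<sigma> ?W = (\<Sum>k\<le>?m. sc (l ^ k) (lc x y A ?W k))" using 3 by simp
  have "(\<Sum>k\<le>Suc ?m. sc (l ^ k) (lc x y A (v # ?W) k)) =
     (\<Sum>k\<le>Suc ?m. sc (l ^ k) (y * lc x y A ?W k)) +
     (\<Sum>k\<le>Suc ?m. sc (l ^ k) (if v \<in> A \<and> k \<ge> 1 then x * lc x y A ?W (k - 1) else 0))"
    by (simp only: lc.simps m.scale_right_distrib sum.distrib)
  also have "(\<Sum>k\<le>Suc ?m. sc (l ^ k) (y * lc x y A ?W k)) = y * (\<Sum>k\<le>?m. sc (l ^ k) (lc x y A ?W k))"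
  proof -
    have "(\<Sum>k\<le>Suc ?m. sc (l ^ k) (y * lc x y A ?W k)) = (\<Sum>k\<le>?m. sc (l ^ k) (y * lc x y A ?W k))"
      using lc_big[of ?W "Suc ?m" x y A] by (simp only: sum.atMost_Suc) simp
    also have "\<dots> = y * (\<Sum>k\<le>?m. sc (l ^ k) (lc x y A ?W k))"
      by (simp only: sum_distrib_left alg_r[OF alg])
    finally show ?thesis .
  qed
  also have "(\<Sum>k\<le>Suc ?m. sc (l ^ k) (if v \<in> A \<and> k \<ge> 1 then x * lc x y A ?W (k - 1) else 0)) =
     (if v \<in> A then sc l x * (\<Sum>k\<le>?m. sc (l ^ k) (lc x y A ?W k)) else 0)"
  proof -
    have "(\<Sum>k\<le>Suc ?m. sc (l ^ k) (if v \<in> A \<and> k \<ge> 1 then x * lc x y A ?W (k - 1) else 0)) =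
       (\<Sum>k\<le>?m. sc (l ^ Suc k) (if v \<in> A then x * lc x y A ?W k else 0))"
      by (subst sum.atMost_Suc_shift) simp
    also have "\<dots> = (if v \<in> A then sc l x * (\<Sum>k\<le>?m. sc (l ^ k) (lc x y A ?W k)) else 0)"
    proof -
      have t: "sc (l ^ Suc k) (x * L) = sc l x * sc (l ^ k) L" for k L
      proof -
        have "sc (l ^ Suc k) (x * L) = sc l (sc (l ^ k) (x * L))" by simp
        also have "\<dots> = sc l (x * sc (l ^ k) L)" by (simp only: alg_r[OF alg, of "l ^ k"])
        also have "\<dots> = sc l x * sc (l ^ k) L" by (rule alg_l[OF alg])
        finally show ?thesis .
      qed
      show ?thesis by (cases "v \<in> A") (simp_all only: t sum_distrib_left if_distrib m.scale_zero_right sum.neutral_const if_True if_False)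
    qed
    finally show ?thesis .
  qed
  finally have "(\<Sum>k\<le>Suc ?m. sc (l ^ k) (lc x y A (v # ?W) k)) = ?\<sigma> v * eval_word ?\<sigma> ?W"
    unfolding IH by (simp add: distrib_right)
  then show ?case by simp
qed simp

definition E :: "'r::ring \<Rightarrow> 'r \<Rightarrow> nat \<Rightarrow> nat \<Rightarrow> 'r" where
  "E x y n i = eval_word (\<lambda>v. if v = 0 then x else y) (pl_mono n i)"

lemma pl_mono_ne: "pl_mono n i \<noteq> []"
  by (simp add: pl_mono_def)

lemma E_Suc: "i \<le> n \<Longrightarrow> E x y (Suc n) (Suc i) = y * E x y n i"
proof -
  assume "i \<le> n"
  then have "pl_mono (Suc n) (Suc i) = 1 # pl_mono n i" by (simp add: pl_mono_def)
  then show ?thesis unfolding E_def by (simp add: eval_cons pl_mono_ne)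
qed

lemma E_0: "w \<noteq> [] \<Longrightarrow> E x y (length w) 0 = x * eval_word (\<lambda>_. y) w"
proof -
  assume w: "w \<noteq> []"
  have "pl_mono (length w) 0 = 0 # map (\<lambda>_. 1) w" by (simp add: pl_mono_def map_replicate_const)
  then show ?thesis unfolding E_def using w by (simp add: eval_cons eval_map o_def)
qed

lemma lc0: "w \<noteq> [] \<Longrightarrow> lc x y A w 0 = eval_word (\<lambda>_. y) w"
  by (induction x y A w "0::nat" rule: lc.induct) auto

lemma lc1: "w \<noteq> [] \<Longrightarrow> lc x y A w 1 = (\<Sum>i\<le>length w - 1. if w ! i \<in> A then E x y (length w - 1) i else 0)"
proof (induction w rule: induct_list012)
  case (2 v)
  then show ?case by (simp add: E_def pl_mono_def)
next
  case (3 v w ws)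
  let ?W = "w # ws"
  define m where "m = length ws"
  have "lc x y A (v # ?W) 1 = y * lc x y A ?W 1 + (if v \<in> A then x * lc x y A ?W 0 else 0)"
    by simp
  also have "\<dots> = y * (\<Sum>i\<le>m. if ?W ! i \<in> A then E x y m i else 0) + (if v \<in> A then E x y (Suc m) 0 else 0)"
  proof -
    have IH: "lc x y A ?W 1 = (\<Sum>i\<le>m. if ?W ! i \<in> A then E x y m i else 0)"
      using 3 by (simp add: m_def cong: if_cong)
    show ?thesis unfolding IH using E_0[of ?W x y] by (simp add: lc0 m_def)
  qed
  also have "\<dots> = (\<Sum>i\<le>m. if ?W ! i \<in> A then E x y (Suc m) (Suc i) else 0) + (if v \<in> A then E x y (Suc m) 0 else 0)"
    by (simp add: sum_distrib_left E_Suc if_distrib cong: if_cong)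
  also have "\<dots> = (\<Sum>i\<le>Suc m. if (v # ?W) ! i \<in> A then E x y (Suc m) i else 0)"
    by (subst sum.atMost_Suc_shift) simp
  finally show ?case by (simp add: m_def cong: if_cong)
qed simp



lemma tfD: "torsion_free sc \<Longrightarrow> a \<noteq> 0 \<Longrightarrow> sc a r = 0 \<Longrightarrow> r = 0"
  unfolding torsion_free_def by blast

lemma sc_if: "module sc \<Longrightarrow> sc (if c then a else 0) e = (if c then sc a e else 0)"
  by (simp add: module.scale_zero_left)

lemma binom_pl:
  fixes sc :: "'k::idom \<Rightarrow> 'r::ring \<Rightarrow> 'r"
  assumes Kinf: "infinite (UNIV :: 'k set)" and alg: "assoc_algebra sc" and tf: "torsion_free sc"
    and sat: "binomial_satisfies sc a1 u1 a2 u2"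
    and l1: "length u1 = Suc n" and l2: "length u2 = Suc n"
  shows "pl_satisfies sc n (\<lambda>i. (if u1 ! i \<in> A then a1 else 0) + (if u2 ! i \<in> A then a2 else 0))"
  unfolding pl_satisfies_def
proof (intro allI)
  fix x y :: 'r
  interpret m: module sc using alg_module[OF alg] .
  have ne: "u1 \<noteq> []" "u2 \<noteq> []" using l1 l2 by auto
  define c where "c k = sc a1 (lc x y A u1 k) + sc a2 (lc x y A u2 k)" for k
  have "(\<Sum>k\<le>Suc n. sc (l ^ k) (c k)) = 0" for l
  proof -
    let ?\<sigma> = "\<lambda>v. y + (if v \<in> A then sc l x else 0)"
    have "sc a1 (eval_word ?\<sigma> u1) + sc a2 (eval_word ?\<sigma> u2) = 0"
      using sat unfolding binomial_satisfies_def by blast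
    moreover have "sc a1 (eval_word ?\<sigma> u1) + sc a2 (eval_word ?\<sigma> u2) = (\<Sum>k\<le>Suc n. sc (l ^ k) (c k))"
    proof -
      have sw: "sc a (sc (l ^ k) X) = sc (l ^ k) (sc a X)" for a k X by (simp add: mult.commute)
      have "sc a1 (eval_word ?\<sigma> u1) + sc a2 (eval_word ?\<sigma> u2) =
        sc a1 (\<Sum>k\<le>Suc n. sc (l ^ k) (lc x y A u1 k)) + sc a2 (\<Sum>k\<le>Suc n. sc (l ^ k) (lc x y A u2 k))"
        by (simp only: lc_expand[OF alg ne(1)] lc_expand[OF alg ne(2)] l1 l2)
      also have "\<dots> = (\<Sum>k\<le>Suc n. sc a1 (sc (l ^ k) (lc x y A u1 k)) + sc a2 (sc (l ^ k) (lc x y A u2 k)))"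
        by (simp only: m.scale_sum_right sum.distrib)
      also have "\<dots> = (\<Sum>k\<le>Suc n. sc (l ^ k) (c k))"
        by (simp only: sw c_def m.scale_right_distrib)
      finally show ?thesis .
    qed
    ultimately show ?thesis by simp
  qed
  then have "\<forall>k\<le>Suc n. c k = 0" using vander[OF Kinf alg tf, where D="Suc n" and c=c] by blast
  then have "c 1 = 0" by simp
  moreover have "c 1 = (\<Sum>i\<le>n. sc ((if u1 ! i \<in> A then a1 else 0) + (if u2 ! i \<in> A then a2 else 0))
      (eval_word (\<lambda>v. if v = 0 then x else y) (pl_mono n i)))"
  proof -
    have "c 1 = sc a1 (\<Sum>i\<le>n. if u1 ! i \<in> A then E x y n i else 0) + sc a2 (\<Sum>i\<le>n. if u2 ! i \<in> A then E x y n i else 0)"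
      by (simp only: c_def lc1[OF ne(1)] lc1[OF ne(2)] l1 l2 diff_Suc_1)
    also have "\<dots> = (\<Sum>i\<le>n. sc a1 (if u1 ! i \<in> A then E x y n i else 0) + sc a2 (if u2 ! i \<in> A then E x y n i else 0))"
      by (simp only: m.scale_sum_right sum.distrib)
    also have "\<dots> = (\<Sum>i\<le>n. sc ((if u1 ! i \<in> A then a1 else 0) + (if u2 ! i \<in> A then a2 else 0))
      (eval_word (\<lambda>v. if v = 0 then x else y) (pl_mono n i)))"
      by (rule sum.cong[OF refl]) (simp add: E_def m.scale_left_distrib)
    finally show ?thesis .
  qed
  ultimately show "(\<Sum>i\<le>n. sc ((if u1 ! i \<in> A then a1 else 0) + (if u2 ! i \<in> A then a2 else 0))
      (eval_word (\<lambda>v. if v = 0 then x else y) (pl_mono n i))) = 0" by simp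
qed


lemma len_diff:
  fixes sc :: "'k::idom \<Rightarrow> 'r::ring \<Rightarrow> 'r" and \<sigma> :: "nat \<Rightarrow> 'r"
  assumes Kinf: "infinite (UNIV :: 'k set)" and alg: "assoc_algebra sc" and tf: "torsion_free sc"
    and sat: "binomial_satisfies sc a1 u1 a2 u2"
    and ne: "u1 \<noteq> []" "u2 \<noteq> []" and a2: "a2 \<noteq> 0" and len: "length u1 \<noteq> length u2"
  shows "eval_word \<sigma> u2 = 0"
proof -
  interpret m: module sc using alg_module[OF alg] .
  obtain \<mu> :: 'k where mu: "\<mu> \<notin> {\<mu>. \<mu> ^ length u1 = \<mu> ^ length u2}"
    using exists_avoid[OF Kinf finite_pow_eq[OF len]] by blast
  let ?d1 = "length u1" and ?d2 = "length u2"
  let ?U1 = "eval_word \<sigma> u1" and ?U2 = "eval_word \<sigma> u2"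
  have e1: "sc a1 (sc (\<mu> ^ ?d1) ?U1) + sc a2 (sc (\<mu> ^ ?d2) ?U2) = 0"
    using sat unfolding binomial_satisfies_def
    by (metis eval_scale[OF alg ne(1)] eval_scale[OF alg ne(2)])
  have e2: "sc a1 ?U1 + sc a2 ?U2 = 0" using sat unfolding binomial_satisfies_def by blast
  have "sc (a2 * (\<mu> ^ ?d2 - \<mu> ^ ?d1)) ?U2 =
     (sc a1 (sc (\<mu> ^ ?d1) ?U1) + sc a2 (sc (\<mu> ^ ?d2) ?U2)) - sc (\<mu> ^ ?d1) (sc a1 ?U1 + sc a2 ?U2)"
    by (simp add: m.scale_right_distrib m.scale_left_diff_distrib right_diff_distrib mult.commute[of a1] mult.commute[of a2])
  also have "\<dots> = 0" using e1 e2 by simp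
  finally have "sc (a2 * (\<mu> ^ ?d2 - \<mu> ^ ?d1)) ?U2 = 0" .
  moreover have "a2 * (\<mu> ^ ?d2 - \<mu> ^ ?d1) \<noteq> 0" using a2 mu by auto
  ultimately show ?thesis using tf unfolding torsion_free_def by blast
qed

lemma dich:
  fixes sc :: "'k::idom \<Rightarrow> 'r::ring \<Rightarrow> 'r"
  assumes Kinf: "infinite (UNIV :: 'k set)" and alg: "assoc_algebra sc" and tf: "torsion_free sc"
    and nt: "binomial_nontrivial a1 u1 a2 u2" and sat: "binomial_satisfies sc a1 u1 a2 u2"
  shows "(\<exists>w. w \<noteq> [] \<and> (\<forall>\<sigma>. eval_word \<sigma> w = (0::'r))) \<or>
    (u1 \<noteq> u2 \<and> a1 \<noteq> 0 \<and> a2 \<noteq> 0 \<and> length u1 = length u2)"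
proof -
  interpret m: module sc using alg_module[OF alg] .
  have ne: "u1 \<noteq> []" "u2 \<noteq> []" using nt by (auto simp: binomial_nontrivial_def)
  have e: "sc a1 (eval_word \<sigma> u1) + sc a2 (eval_word \<sigma> u2) = 0" for \<sigma>
    using sat unfolding binomial_satisfies_def by blast
  have z: "(\<forall>\<sigma>. eval_word \<sigma> w = (0::'r))" if "a \<noteq> 0" "\<And>\<sigma>. sc a (eval_word \<sigma> w) = 0" for a w
    using that tf unfolding torsion_free_def by blast
  show ?thesis
  proof (cases "u1 = u2")
    case True
    then have "a1 + a2 \<noteq> 0" using nt by (auto simp: binomial_nontrivial_def)
    moreover have "sc (a1 + a2) (eval_word \<sigma> u1) = 0" for \<sigma> using e[of \<sigma>] True by (simp add: m.scale_left_distrib)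
    ultimately show ?thesis using z ne by blast
  next
    case False
    show ?thesis
    proof (cases "a1 = 0")
      case True
      then have "a2 \<noteq> 0" using nt False by (auto simp: binomial_nontrivial_def)
      then show ?thesis using z[of a2 u2] e True ne by auto
    next
      case a1: False
      show ?thesis
      proof (cases "a2 = 0")
        case True
        then show ?thesis using z[of a1 u1] e a1 ne by auto
      next
        case a2: False
        show ?thesis
        proof (cases "length u1 = length u2")
          case True then show ?thesis using False a1 a2 by blast
        next
          case len: False
          then show ?thesis using len_diff[OF Kinf alg tf sat ne a2 len] ne by blast
        qed
      qed
    qed
  qed
qed

lemma zero_word_sg:
  assumes "w \<noteq> []" "\<forall>\<sigma>. eval_word \<sigma> w = (0::'r::ring)"
  shows "\<exists>u v. sg_identity u v \<and> sg_satisfies TYPE('r) u v"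
proof (intro exI conjI)
  show "sg_identity w (w @ w)" using assms by (auto simp: sg_identity_def)
  show "sg_satisfies TYPE('r) w (w @ w)" using assms by (simp add: sg_satisfies_def eval_append)
qed

lemma eval_const: "w \<noteq> [] \<Longrightarrow> eval_word (\<lambda>_. r) w = spow r (length w)"
proof -
  assume w: "w \<noteq> []"
  have "map (\<lambda>_. 0::nat) w = replicate (length w) 0" by (simp add: map_replicate_const)
  then show ?thesis unfolding spow_def using eval_map[OF w, of "\<lambda>_. r" "\<lambda>_. 0"] by (simp add: o_def)
qed

lemma part_ii:
  fixes sc :: "'k::idom \<Rightarrow> 'r::ring \<Rightarrow> 'r"
  assumes Kinf: "infinite (UNIV :: 'k set)" and alg: "assoc_algebra sc" and tf: "torsion_free sc"
    and nt: "binomial_nontrivial a1 u1 a2 u2" and sat: "binomial_satisfies sc a1 u1 a2 u2"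
  shows "bounded_nil TYPE('r) \<or> (\<exists>u v. sg_identity u v \<and> sg_satisfies TYPE('r) u v)"
proof -
  interpret m: module sc using alg_module[OF alg] .
  have ne: "u1 \<noteq> []" "u2 \<noteq> []" using nt by (auto simp: binomial_nontrivial_def)
  have e: "sc a1 (eval_word \<sigma> u1) + sc a2 (eval_word \<sigma> u2) = 0" for \<sigma>
    using sat unfolding binomial_satisfies_def by blast
  from dich[OF Kinf alg tf nt sat] show ?thesis
  proof
    assume "\<exists>w. w \<noteq> [] \<and> (\<forall>\<sigma>. eval_word \<sigma> w = (0::'r))"
    then show ?thesis using zero_word_sg by blast
  next
    assume h: "u1 \<noteq> u2 \<and> a1 \<noteq> 0 \<and> a2 \<noteq> 0 \<and> length u1 = length u2"
    show ?thesis
    proof (cases "a1 + a2 = 0")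
      case True
      then have a2: "a2 = - a1" using minus_unique[OF True] by simp
      have "eval_word \<sigma> u1 = eval_word \<sigma> u2" for \<sigma> :: "nat \<Rightarrow> 'r"
      proof -
        have "sc a1 (eval_word \<sigma> u1 - eval_word \<sigma> u2) = 0" using e[of \<sigma>] a2
          by (simp add: m.scale_right_diff_distrib)
        then have "eval_word \<sigma> u1 - eval_word \<sigma> u2 = 0" using h tfD[OF tf] by blast
        then show ?thesis by simp
      qed
      then have "sg_identity u1 u2 \<and> sg_satisfies TYPE('r) u1 u2"
        using h ne by (auto simp: sg_identity_def sg_satisfies_def)
      then show ?thesis by blast
    next
      case False
      have "spow r (length u1) = 0" for r :: 'r
      proof -
        have "sc (a1 + a2) (spow r (length u1)) = 0"
          using e[of "\<lambda>_. r"] h eval_const[OF ne(1), of r] eval_const[OF ne(2), of r]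
          by (simp add: m.scale_left_distrib)
        then show ?thesis using False tfD[OF tf] by blast
      qed
      moreover have "length u1 \<ge> 1" using ne by (cases u1) auto
      ultimately show ?thesis unfolding bounded_nil_def by blast
    qed
  qed
qed



lemma zero_word_pl:
  fixes sc :: "'k::idom \<Rightarrow> 'r::ring \<Rightarrow> 'r"
  assumes Kinf: "infinite (UNIV :: 'k set)" and alg: "assoc_algebra sc" and tf: "torsion_free sc"
    and w: "w \<noteq> []" "\<forall>\<sigma>. eval_word \<sigma> w = (0::'r)"
  shows "\<exists>n \<alpha>. pl_nontrivial n \<alpha> \<and> \<alpha> 0 \<noteq> 0 \<and> \<alpha> n \<noteq> 0 \<and> pl_satisfies sc n \<alpha>"
proof -
  interpret m: module sc using alg_module[OF alg] .
  have sat: "binomial_satisfies sc 1 w 0 w" using w by (simp add: binomial_satisfies_def)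
  have l: "length w = Suc (length w - 1)" using w by (cases w) auto
  have "pl_satisfies sc (length w - 1) (\<lambda>i. (if w ! i \<in> UNIV then 1 else 0) + (if w ! i \<in> UNIV then 0 else 0))"
    by (rule binom_pl[OF Kinf alg tf sat l l])
  moreover have "(\<lambda>i. (if w ! i \<in> UNIV then 1 else 0) + (if w ! i \<in> UNIV then 0 else 0)) = (\<lambda>_. 1::'k)"
    by auto
  ultimately have "pl_satisfies sc (length w - 1) (\<lambda>_. 1::'k)" by simp
  then show ?thesis by (intro exI[of _ "length w - 1"] exI[of _ "\<lambda>_. 1::'k"]) (auto simp: pl_nontrivial_def)
qed

lemma part_iii:
  fixes sc :: "'k::idom \<Rightarrow> 'r::ring \<Rightarrow> 'r"
  assumes Kinf: "infinite (UNIV :: 'k set)" and alg: "assoc_algebra sc" and tf: "torsion_free sc"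
    and nt: "binomial_nontrivial a1 u1 a2 u2" and sat: "binomial_satisfies sc a1 u1 a2 u2"
  shows "left_reduced u1 u2 \<Longrightarrow> \<exists>n \<alpha>. pl_nontrivial n \<alpha> \<and> \<alpha> 0 \<noteq> 0 \<and> pl_satisfies sc n \<alpha>"
    and "right_reduced u1 u2 \<Longrightarrow> \<exists>n \<alpha>. pl_nontrivial n \<alpha> \<and> \<alpha> n \<noteq> 0 \<and> pl_satisfies sc n \<alpha>"
    and "reduced u1 u2 \<Longrightarrow> \<exists>n \<alpha>. pl_nontrivial n \<alpha> \<and> \<alpha> 0 \<noteq> 0 \<and> \<alpha> n \<noteq> 0 \<and> pl_satisfies sc n \<alpha>"
proof -
  have ne: "u1 \<noteq> []" "u2 \<noteq> []" using nt by (auto simp: binomial_nontrivial_def)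
  define n where "n = length u1 - 1"
  have hd: "u1 ! 0 = hd u1" "u2 ! 0 = hd u2" using ne by (auto simp: hd_conv_nth)
  have G: "(\<exists>w. w \<noteq> [] \<and> (\<forall>\<sigma>. eval_word \<sigma> w = (0::'r))) \<or>
    (u1 \<noteq> u2 \<and> a1 \<noteq> 0 \<and> a2 \<noteq> 0 \<and> length u1 = length u2)"
    by (rule dich[OF Kinf alg tf nt sat])
  have Z: "\<exists>n \<alpha>. pl_nontrivial n \<alpha> \<and> \<alpha> 0 \<noteq> 0 \<and> \<alpha> n \<noteq> 0 \<and> pl_satisfies sc n \<alpha>"
    if "\<exists>w. w \<noteq> [] \<and> (\<forall>\<sigma>. eval_word \<sigma> w = (0::'r))"
    using that zero_word_pl[OF Kinf alg tf] by blast
  have M: "pl_satisfies sc n (\<lambda>i. (if u1 ! i \<in> A then a1 else 0) + (if u2 ! i \<in> A then a2 else 0))"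
    if "length u1 = length u2" for A
  proof -
    have l1: "length u1 = Suc n" using ne n_def by (cases u1) auto
    then have l2: "length u2 = Suc n" using that by simp
    show ?thesis by (rule binom_pl[OF Kinf alg tf sat l1 l2])
  qed
  have lst: "u1 ! n = last u1" "length u1 = length u2 \<Longrightarrow> u2 ! n = last u2"
    using ne by (auto simp: last_conv_nth n_def)
  have nt0: "\<And>\<alpha>. \<alpha> 0 \<noteq> 0 \<Longrightarrow> pl_nontrivial n \<alpha>" by (auto simp: pl_nontrivial_def)
  have ntn: "\<And>\<alpha>. \<alpha> n \<noteq> 0 \<Longrightarrow> pl_nontrivial n \<alpha>" by (auto simp: pl_nontrivial_def)
  show "left_reduced u1 u2 \<Longrightarrow> \<exists>n \<alpha>. pl_nontrivial n \<alpha> \<and> \<alpha> 0 \<noteq> 0 \<and> pl_satisfies sc n \<alpha>"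
  proof -
    assume lr: "left_reduced u1 u2"
    show ?thesis using G
    proof
      assume h: "u1 \<noteq> u2 \<and> a1 \<noteq> 0 \<and> a2 \<noteq> 0 \<and> length u1 = length u2"
      let ?\<alpha> = "\<lambda>i. (if u1 ! i \<in> {hd u1} then a1 else 0) + (if u2 ! i \<in> {hd u1} then a2 else 0)"
      have a0: "?\<alpha> 0 \<noteq> 0" using h lr hd by (auto simp: left_reduced_def)
      have P: "pl_satisfies sc n ?\<alpha>" using h M by blast
      have N: "pl_nontrivial n ?\<alpha>" using a0 by (rule nt0)
      show ?thesis using a0 P N by blast
    qed (use Z in blast)
  qed
  show "right_reduced u1 u2 \<Longrightarrow> \<exists>n \<alpha>. pl_nontrivial n \<alpha> \<and> \<alpha> n \<noteq> 0 \<and> pl_satisfies sc n \<alpha>"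
  proof -
    assume lr: "right_reduced u1 u2"
    show ?thesis using G
    proof
      assume h: "u1 \<noteq> u2 \<and> a1 \<noteq> 0 \<and> a2 \<noteq> 0 \<and> length u1 = length u2"
      let ?\<alpha> = "\<lambda>i. (if u1 ! i \<in> {last u1} then a1 else 0) + (if u2 ! i \<in> {last u1} then a2 else 0)"
      have a0: "?\<alpha> n \<noteq> 0" using h lr lst by (auto simp: right_reduced_def)
      have P: "pl_satisfies sc n ?\<alpha>" using h M by blast
      have N: "pl_nontrivial n ?\<alpha>" using a0 by (rule ntn)
      show ?thesis using a0 P N by blast
    qed (use Z in blast)
  qed
  show "reduced u1 u2 \<Longrightarrow> \<exists>n \<alpha>. pl_nontrivial n \<alpha> \<and> \<alpha> 0 \<noteq> 0 \<and> \<alpha> n \<noteq> 0 \<and> pl_satisfies sc n \<alpha>"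
  proof -
    assume lr: "reduced u1 u2"
    show ?thesis using G
    proof
      assume h: "u1 \<noteq> u2 \<and> a1 \<noteq> 0 \<and> a2 \<noteq> 0 \<and> length u1 = length u2"
      define f where "f = col (hd u1) (hd u2) (last u1) (last u2)"
      have cp: "f (hd u1) = 0" "f (hd u2) = 1" "f (last u1) \<noteq> f (last u2)"
        using col_props[of "hd u1" "hd u2" "last u1" "last u2"] lr
        by (auto simp: f_def reduced_def left_reduced_def right_reduced_def)
      have f01: "f k = 0 \<or> f k = 1" for k using col_01 unfolding f_def by auto
      let ?A = "{k. f k = 0}"
      let ?\<alpha> = "\<lambda>i. (if u1 ! i \<in> ?A then a1 else 0) + (if u2 ! i \<in> ?A then a2 else 0)"
      have a0: "?\<alpha> 0 \<noteq> 0" using h cp hd by auto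
      moreover have an: "?\<alpha> n \<noteq> 0"
      proof -
        have "(f (last u1) = 0 \<and> f (last u2) = 1) \<or> (f (last u1) = 1 \<and> f (last u2) = 0)"
          using cp(3) f01[of "last u1"] f01[of "last u2"] by auto
        then show ?thesis using h lst by auto
      qed
      have P: "pl_satisfies sc n ?\<alpha>" using h M by blast
      have N: "pl_nontrivial n ?\<alpha>" using a0 by (rule nt0)
      show ?thesis using a0 an P N by blast
    qed (use Z in blast)
  qed
qed


theorem proposition2p1:
  fixes sc :: "'k::idom \<Rightarrow> 'r::ring \<Rightarrow> 'r"
  assumes K_infinite: "infinite (UNIV :: 'k set)"
    and alg: "assoc_algebra sc"
    and tf: "torsion_free sc"
  shows
    "((\<exists>u v. sg_identity u v \<and> left_reduced u v \<and> sg_satisfies TYPE('s::semigroup_mult) u v)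
        \<longrightarrow> (\<exists>u v. sg_identity u v \<and> left_reduced u v \<and> in_xy u v \<and> sg_satisfies TYPE('s) u v))
     \<and> ((\<exists>u v. sg_identity u v \<and> right_reduced u v \<and> sg_satisfies TYPE('s) u v)
        \<longrightarrow> (\<exists>u v. sg_identity u v \<and> right_reduced u v \<and> in_xy u v \<and> sg_satisfies TYPE('s) u v))
     \<and> ((\<exists>u v. sg_identity u v \<and> reduced u v \<and> sg_satisfies TYPE('s) u v)
        \<longrightarrow> (\<exists>u v. sg_identity u v \<and> reduced u v \<and> in_xy u v \<and> sg_satisfies TYPE('s) u v))
     \<and> ((\<exists>a1 u1 a2 u2. binomial_nontrivial a1 u1 a2 u2 \<and> binomial_satisfies sc a1 u1 a2 u2)
        \<longrightarrow> bounded_nil TYPE('r) \<or> (\<exists>u v. sg_identity u v \<and> sg_satisfies TYPE('r) u v))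
     \<and> ((\<exists>a1 u1 a2 u2. binomial_nontrivial a1 u1 a2 u2 \<and> left_reduced u1 u2
          \<and> binomial_satisfies sc a1 u1 a2 u2)
        \<longrightarrow> (\<exists>n \<alpha>. pl_nontrivial n \<alpha> \<and> \<alpha> 0 \<noteq> 0 \<and> pl_satisfies sc n \<alpha>))
     \<and> ((\<exists>a1 u1 a2 u2. binomial_nontrivial a1 u1 a2 u2 \<and> right_reduced u1 u2
          \<and> binomial_satisfies sc a1 u1 a2 u2)
        \<longrightarrow> (\<exists>n \<alpha>. pl_nontrivial n \<alpha> \<and> \<alpha> n \<noteq> 0 \<and> pl_satisfies sc n \<alpha>))
     \<and> ((\<exists>a1 u1 a2 u2. binomial_nontrivial a1 u1 a2 u2 \<and> reduced u1 u2
          \<and> binomial_satisfies sc a1 u1 a2 u2)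
        \<longrightarrow> (\<exists>n \<alpha>. pl_nontrivial n \<alpha> \<and> \<alpha> 0 \<noteq> 0 \<and> \<alpha> n \<noteq> 0 \<and> pl_satisfies sc n \<alpha>))
     \<and> (\<forall>n. n \<ge> 1 \<longrightarrow> (\<forall>y :: 'r. spow y n = 0) \<longrightarrow> (\<forall>x y :: 'r. e_comm x y (2 * n - 1) = 0))"
  proof (intro conjI impI allI)
  show "\<exists>u v. sg_identity u v \<and> left_reduced u v \<and> in_xy u v \<and> sg_satisfies TYPE('s) u v"
    if "\<exists>u v. sg_identity u v \<and> left_reduced u v \<and> sg_satisfies TYPE('s::semigroup_mult) u v"
    using that part_i(1) by blast
  show "\<exists>u v. sg_identity u v \<and> right_reduced u v \<and> in_xy u v \<and> sg_satisfies TYPE('s) u v"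
    if "\<exists>u v. sg_identity u v \<and> right_reduced u v \<and> sg_satisfies TYPE('s::semigroup_mult) u v"
    using that part_i(2) by blast
  show "\<exists>u v. sg_identity u v \<and> reduced u v \<and> in_xy u v \<and> sg_satisfies TYPE('s) u v"
    if "\<exists>u v. sg_identity u v \<and> reduced u v \<and> sg_satisfies TYPE('s::semigroup_mult) u v"
    using that part_i(3) by blast
  show "bounded_nil TYPE('r) \<or> (\<exists>u v. sg_identity u v \<and> sg_satisfies TYPE('r) u v)"
    if "\<exists>a1 u1 a2 u2. binomial_nontrivial a1 u1 a2 u2 \<and> binomial_satisfies sc a1 u1 a2 u2"
    using that part_ii[OF K_infinite alg tf] by blast
  show "\<exists>n \<alpha>. pl_nontrivial n \<alpha> \<and> \<alpha> 0 \<noteq> 0 \<and> pl_satisfies sc n \<alpha>"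
    if "\<exists>a1 u1 a2 u2. binomial_nontrivial a1 u1 a2 u2 \<and> left_reduced u1 u2 \<and> binomial_satisfies sc a1 u1 a2 u2"
    using that part_iii(1)[OF K_infinite alg tf] by blast
  show "\<exists>n \<alpha>. pl_nontrivial n \<alpha> \<and> \<alpha> n \<noteq> 0 \<and> pl_satisfies sc n \<alpha>"
    if "\<exists>a1 u1 a2 u2. binomial_nontrivial a1 u1 a2 u2 \<and> right_reduced u1 u2 \<and> binomial_satisfies sc a1 u1 a2 u2"
    using that part_iii(2)[OF K_infinite alg tf] by blast
  show "\<exists>n \<alpha>. pl_nontrivial n \<alpha> \<and> \<alpha> 0 \<noteq> 0 \<and> \<alpha> n \<noteq> 0 \<and> pl_satisfies sc n \<alpha>"
    if "\<exists>a1 u1 a2 u2. binomial_nontrivial a1 u1 a2 u2 \<and> reduced u1 u2 \<and> binomial_satisfies sc a1 u1 a2 u2"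
    using that part_iii(3)[OF K_infinite alg tf] by blast
  fix n :: nat and x y :: 'r
  assume "1 \<le> n" "\<forall>y :: 'r. spow y n = 0"
  then show "e_comm x y (2 * n - 1) = 0" by (rule part_iv)
qed

end
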